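(* Let $k>0$ and $\mu\in\mathbb C$. The Riesz distribution $R_\mu$ has the following properties: (1) $R_\mu$ is $S_n$-invariant, i.e. $R_\mu^\sigma=R_\mu$ for all $\sigma\in S_n$; (2) $\mathrm{supp}\,R_\mu\subseteq\overline{\mathbb R_+^n}$; (3) $D(x)R_\mu=\prod_{j=1}^n(\mu-k(j-1))\cdot R_{\mu+1}$.
   Context: $S_n$ permutes coordinates; $\varphi^\sigma=\varphi\circ\sigma^{-1}$ and $\langle u^\sigma,\varphi\rangle=\langle u,\varphi^{\sigma^{-1}}\rangle$ for distributions $u$. $D(x)=\prod_ix_i$, $\mathbb R_+=]0,\infty[$, $\mu_0=k(n-1)$, $\omega_k(x)=\prod_{i<j}|x_i-x_j|^{2k}$, $d_n(k)=\prod_{j=1}^n\frac{\Gamma(1+jk)}{\Gamma(1+k)}$, $\Gamma_n(\mu;k)=\prod_{j=1}^n\Gamma(\mu-k(j-1))$. Dunkl operators $T_i(k)=\frac{\partial}{\partial x_i}+k\sum_{j\ne i}\frac{1}{x_i-x_j}(1-\sigma_{ij})$ ($\sigma_{ij}$ exchanging $x_i,x_j$), $D(T(k))=\prod_iT_i(k)$, acting on $\mathcal S'(\mathbb R^n)$ by $\langle T_i(k)u,\varphi\rangle=-\langle u,T_i(k)\varphi\rangle$. For $\mathrm{Re}\,\mu>\mu_0$, $\langle R_\mu,\varphi\rangle=\frac{1}{d_n(k)\Gamma_n(\mu;k)}\int_{\mathbb R_+^n}\varphi(x)D(x)^{\mu-\mu_0-1}\omega_k(x)dx$; for general $\mu$,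 $R_\mu$ is the unique holomorphic $\mathcal S'(\mathbb R^n)$-valued extension of $\mu\mapsto R_\mu$ to $\mathbb C$ (it satisfies $D(T(k))R_\mu=R_{\mu-1}$). *)

theory Defs
  imports "HOL-Analysis.Analysis"
begin

text \<open>Points of R^n are vectors real^'n, with n = CARD('n).
  Test functions and distributions are complex valued.\<close>

definition partial_deriv :: "'n::finite \<Rightarrow> (real^'n \<Rightarrow> complex) \<Rightarrow> real^'n \<Rightarrow> complex" where
  "partial_deriv i f x = vector_derivative (\<lambda>t. f (x + t *\<^sub>R axis i 1)) (at 0)"

fun iter_partial :: "'n::finite list \<Rightarrow> (real^'n \<Rightarrow> complex) \<Rightarrow> real^'n \<Rightarrow> complex" where
  "iter_partial [] f = f"
| "iter_partial (i # is) f = partial_deriv i (iter_partial is f)"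

definition smooth_fun :: "(real^'n::finite \<Rightarrow> complex) \<Rightarrow> bool" where
  "smooth_fun f \<longleftrightarrow> (\<forall>is x. iter_partial is f differentiable (at x))"

definition monomial :: "('n::finite \<Rightarrow> nat) \<Rightarrow> real^'n \<Rightarrow> real" where
  "monomial \<alpha> x = (\<Prod>i\<in>UNIV. (x $ i) ^ (\<alpha> i))"

definition schwartz :: "(real^'n::finite \<Rightarrow> complex) set" where
  "schwartz = {f. smooth_fun f \<and>
     (\<forall>is \<alpha>. bounded (range (\<lambda>x. monomial \<alpha> x *\<^sub>R iter_partial is f x)))}"

definition schwartz_seminorm :: "nat \<Rightarrow> (real^'n::finite \<Rightarrow> complex) \<Rightarrow> real" where
  "schwartz_seminorm N f =
     (\<Sum>is\<in>{is. length is \<le> N}. \<Sum>\<alpha>\<in>{\<alpha>. \<forall>i. \<alpha> i \<le> N}.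
        (SUP x. norm (monomial \<alpha> x *\<^sub>R iter_partial is f x)))"

text \<open>Tempered distributions: continuous linear functionals on S(R^n);
  only their values on Schwartz functions are relevant.\<close>
definition tempered_distribution :: "((real^'n::finite \<Rightarrow> complex) \<Rightarrow> complex) \<Rightarrow> bool" where
  "tempered_distribution u \<longleftrightarrow>
     (\<forall>f\<in>schwartz. \<forall>g\<in>schwartz. \<forall>a b. u (\<lambda>x. a * f x + b * g x) = a * u f + b * u g) \<and>
     (\<exists>C N. \<forall>f\<in>schwartz. norm (u f) \<le> C * schwartz_seminorm N f)"

text \<open>Coordinate permutation action: (perm_act s x)_i = x_(s^-1 i); phi^s = phi o s^-1;
  <u^s, phi> = <u, phi^(s^-1)> = <u, phi o s>.\<close>
definition perm_act :: "('n::finite \<Rightarrow> 'n) \<Rightarrow> real^'n \<Rightarrow> real^'n" where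
  "perm_act s x = (\<chi> i. x $ (inv s i))"

definition fun_perm :: "('n::finite \<Rightarrow> 'n) \<Rightarrow> (real^'n \<Rightarrow> complex) \<Rightarrow> real^'n \<Rightarrow> complex" where
  "fun_perm s f = f \<circ> perm_act (inv s)"

definition dist_perm :: "('n::finite \<Rightarrow> 'n) \<Rightarrow> ((real^'n \<Rightarrow> complex) \<Rightarrow> complex)
    \<Rightarrow> (real^'n \<Rightarrow> complex) \<Rightarrow> complex" where
  "dist_perm s u f = u (fun_perm (inv s) f)"

definition tsupport :: "(real^'n::finite \<Rightarrow> complex) \<Rightarrow> (real^'n) set" where
  "tsupport f = closure {x. f x \<noteq> 0}"

definition dist_supp_subset :: "((real^'n::finite \<Rightarrow> complex) \<Rightarrow> complex) \<Rightarrow> (real^'n) set \<Rightarrow> bool" where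
  "dist_supp_subset u K \<longleftrightarrow>
     (\<forall>f. smooth_fun f \<and> compact (tsupport f) \<and> tsupport f \<inter> K = {} \<longrightarrow> u f = 0)"

definition Dprod :: "real^'n::finite \<Rightarrow> real" where
  "Dprod x = (\<Prod>i\<in>UNIV. x $ i)"

definition dist_mult_D :: "((real^'n::finite \<Rightarrow> complex) \<Rightarrow> complex) \<Rightarrow> (real^'n \<Rightarrow> complex) \<Rightarrow> complex" where
  "dist_mult_D u f = u (\<lambda>x. complex_of_real (Dprod x) * f x)"

definition pos_orthant :: "(real^'n::finite) set" where
  "pos_orthant = {x. \<forall>i. 0 < x $ i}"

text \<open>omega_k(x) = prod_(i<j) |x_i - x_j|^(2k) = prod_(i \<noteq> j) |x_i - x_j|^k.\<close>
definition omega :: "real \<Rightarrow> real^'n::finite \<Rightarrow> real" where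
  "omega k x = (\<Prod>p\<in>{p::'n\<times>'n. fst p \<noteq> snd p}. \<bar>x $ fst p - x $ snd p\<bar> powr k)"

definition d_const :: "nat \<Rightarrow> real \<Rightarrow> real" where
  "d_const n k = (\<Prod>j=1..n. Gamma (1 + real j * k) / Gamma (1 + k))"

definition Gamma_n :: "nat \<Rightarrow> complex \<Rightarrow> real \<Rightarrow> complex" where
  "Gamma_n n \<mu> k = (\<Prod>j=1..n. Gamma (\<mu> - complex_of_real (k * (real j - 1))))"

definition mu0 :: "nat \<Rightarrow> real \<Rightarrow> real" where
  "mu0 n k = k * (real n - 1)"

text \<open>The defining integral of R_mu for Re mu > mu0.\<close>
definition riesz_integral :: "real \<Rightarrow> complex \<Rightarrow> (real^'n::finite \<Rightarrow> complex) \<Rightarrow> complex" where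
  "riesz_integral k \<mu> f =
     integral pos_orthant (\<lambda>x. f x * complex_of_real (Dprod x) powr (\<mu> - of_real (mu0 CARD('n) k) - 1)
                                 * complex_of_real (omega k x))
     / (complex_of_real (d_const CARD('n) k) * Gamma_n CARD('n) \<mu> k)"

text \<open>R is the Riesz family: an entire S'-valued (weakly holomorphic) function of mu
  which agrees with the integral for Re mu > mu0. It is unique by the identity theorem.\<close>
definition is_riesz_family :: "real \<Rightarrow> (complex \<Rightarrow> (real^'n::finite \<Rightarrow> complex) \<Rightarrow> complex) \<Rightarrow> bool" where
  "is_riesz_family k R \<longleftrightarrow>
     (\<forall>\<mu>. tempered_distribution (R \<mu>)) \<and>
     (\<forall>f\<in>schwartz. (\<lambda>\<mu>. R \<mu> f) holomorphic_on UNIV) \<and>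
     (\<forall>\<mu> f. Re \<mu> > mu0 CARD('n) k \<longrightarrow> f \<in> schwartz \<longrightarrow> R \<mu> f = riesz_integral k \<mu> f)"

end

theory Submission
  imports Defs "HOL-Complex_Analysis.Conformal_Mappings"
begin


lemma perm_act_nth [simp]: "perm_act s x $ i = x $ inv s i"
  by (simp add: perm_act_def)

lemma perm_act_inv:
  assumes "s permutes (UNIV::'n::finite set)"
  shows "perm_act s (perm_act (inv s) x) = x" "perm_act (inv s) (perm_act s x) = x"
  using assms by (auto simp: vec_eq_iff permutes_inv_inv permutes_inverses)

lemma perm_act_add: "perm_act s (x + y) = perm_act s x + perm_act s y"
  by (simp add: vec_eq_iff)
lemma perm_act_scale: "perm_act s (c *\<^sub>R x) = c *\<^sub>R perm_act s x"
  by (simp add: vec_eq_iff)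

lemma linear_perm_act: "linear (perm_act s)"
  by (intro linearI) (simp_all add: perm_act_add perm_act_scale)

lemma perm_act_axis:
  assumes "s permutes (UNIV::'n::finite set)"
  shows "perm_act s (axis i 1) = axis (s i) 1"
  using assms by (auto simp: vec_eq_iff axis_def permutes_inverses)

lemma partial_deriv_perm:
  assumes "s permutes (UNIV::'n::finite set)"
  shows "partial_deriv i (g \<circ> perm_act s) x = partial_deriv (s i) g (perm_act s x)"
  unfolding partial_deriv_def
  by (simp add: perm_act_add perm_act_scale perm_act_axis[OF assms])

lemma iter_partial_perm:
  assumes "s permutes (UNIV::'n::finite set)"
  shows "iter_partial is (g \<circ> perm_act s) = iter_partial (map s is) g \<circ> perm_act s"
proof (induction "is")
  case (Cons a "is")
  show ?case
    using partial_deriv_perm[OF assms, of a "iter_partial (map s is) g"]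
    by (simp only: iter_partial.simps Cons.IH) (simp add: fun_eq_iff comp_def)
qed simp

lemma monomial_perm:
  assumes "s permutes (UNIV::'n::finite set)"
  shows "monomial \<alpha> x = monomial (\<alpha> \<circ> inv s) (perm_act s x)"
proof -
  have "inv s permutes UNIV" using assms by (rule permutes_inv)
  then show ?thesis unfolding monomial_def
    by (subst prod.permute[of "inv s"]) (auto simp: comp_def)
qed

lemma schwartz_perm:
  assumes s: "s permutes (UNIV::'n::finite set)" and f: "f \<in> schwartz"
  shows "f \<circ> perm_act s \<in> schwartz"
proof -
  have sm: "iter_partial is f differentiable (at x)" for "is" x
    using f by (auto simp: schwartz_def smooth_fun_def)
  have "iter_partial is (f \<circ> perm_act s) differentiable (at x)" for "is" x
    unfolding iter_partial_perm[OF s]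
    by (intro differentiable_chain_at linear_imp_differentiable linear_perm_act sm)
  moreover have "bounded (range (\<lambda>x. monomial \<alpha> x *\<^sub>R iter_partial is (f \<circ> perm_act s) x))" for "is" \<alpha>
  proof -
    have b: "bounded (range (\<lambda>y. monomial (\<alpha> \<circ> inv s) y *\<^sub>R iter_partial (map s is) f y))"
      using f by (auto simp: schwartz_def)
    have "range (\<lambda>x. monomial \<alpha> x *\<^sub>R iter_partial is (f \<circ> perm_act s) x)
        \<subseteq> range (\<lambda>y. monomial (\<alpha> \<circ> inv s) y *\<^sub>R iter_partial (map s is) f y)"
    proof
      fix y assume "y \<in> range (\<lambda>x. monomial \<alpha> x *\<^sub>R iter_partial is (f \<circ> perm_act s) x)"
      then obtain x where "y = monomial \<alpha> x *\<^sub>R iter_partial is (f \<circ> perm_act s) x" by blast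
      then have "y = monomial (\<alpha> \<circ> inv s) (perm_act s x) *\<^sub>R iter_partial (map s is) f (perm_act s x)"
        by (simp only: iter_partial_perm[OF s] comp_apply monomial_perm[OF s, of \<alpha> x, symmetric])
      then show "y \<in> range (\<lambda>y. monomial (\<alpha> \<circ> inv s) y *\<^sub>R iter_partial (map s is) f y)" by blast
    qed
    then show ?thesis using b bounded_subset by blast
  qed
  ultimately show ?thesis by (auto simp: schwartz_def smooth_fun_def)
qed



lemma norm_perm_act:
  assumes s: "s permutes (UNIV::'n::finite set)"
  shows "norm (perm_act s x) = norm x"
proof -
  have "inv s permutes UNIV" using s by (rule permutes_inv)
  then have "(\<Sum>i\<in>UNIV. (norm (x $ inv s i))\<^sup>2) = (\<Sum>i\<in>UNIV. (norm (x $ i))\<^sup>2)"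
    by (subst sum.permute[of "inv s"]) (auto simp: comp_def)
  then show ?thesis by (simp add: norm_vec_def L2_set_def)
qed

lemma allinv: assumes s: "s permutes (UNIV::'n::finite set)"
  shows "(\<forall>i. P (inv s i)) \<longleftrightarrow> (\<forall>i. P i)"
proof
  assume "\<forall>i. P (inv s i)"
  then have "P (inv s (s i))" for i by blast
  then show "\<forall>i. P i" using permutes_inverses(2)[OF s] by simp
qed simp

lemma perm_act_cbox:
  assumes s: "s permutes (UNIV::'n::finite set)"
  shows "perm_act s ` cbox u v = cbox (perm_act s u) (perm_act s v)"
proof -
  have 1: "x \<in> cbox u v \<longleftrightarrow> perm_act s x \<in> cbox (perm_act s u) (perm_act s v)" for x
    unfolding mem_box_cart perm_act_nth allinv[OF s, of "\<lambda>i. u $ i \<le> x $ i \<and> x $ i \<le> v $ i"] ..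
  show ?thesis
  proof (intro equalityI subsetI)
    fix y assume "y \<in> cbox (perm_act s u) (perm_act s v)"
    then have "perm_act (inv s) y \<in> cbox u v" using 1[of "perm_act (inv s) y"] by (simp add: perm_act_inv[OF s])
    then show "y \<in> perm_act s ` cbox u v"
      by (rule image_eqI[rotated]) (simp add: perm_act_inv[OF s])
  next
    fix y assume "y \<in> perm_act s ` cbox u v"
    then obtain x where "x \<in> cbox u v" "y = perm_act s x" by (rule imageE)
    then show "y \<in> cbox (perm_act s u) (perm_act s v)" using 1[of x] by simp
  qed
qed

lemma content_perm_act:
  assumes s: "s permutes (UNIV::'n::finite set)"
  shows "measure lborel (perm_act s ` cbox u v) = measure lborel (cbox u v)"
proof -
  have ne: "cbox (perm_act s u) (perm_act s v) = {} \<longleftrightarrow> cbox u v = {}"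
    using perm_act_cbox[OF s, of u v] by auto
  have "inv s permutes UNIV" using s by (rule permutes_inv)
  then have pr: "(\<Prod>i\<in>UNIV. v $ inv s i - u $ inv s i) = (\<Prod>i\<in>UNIV. v $ i - u $ i)"
    by (subst (2) prod.permute[of "inv s"]) (auto simp: comp_def)
  have "measure lborel (perm_act s ` cbox u v) = measure lborel (cbox (perm_act s u) (perm_act s v))"
    by (simp only: perm_act_cbox[OF s])
  also have "\<dots> = (if cbox u v = {} then 0 else (\<Prod>i\<in>UNIV. v $ inv s i - u $ inv s i))"
    by (simp only: content_cbox_if_cart ne perm_act_nth)
  also have "\<dots> = measure lborel (cbox u v)"
    by (simp only: content_cbox_if_cart pr)
  finally show ?thesis .
qed

lemma has_integral_perm_UNIV:
  assumes s: "s permutes (UNIV::'n::finite set)"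
    and f: "(f has_integral i) (UNIV :: (real^'n) set)"
  shows "((\<lambda>x. f (perm_act s x)) has_integral i) UNIV"
proof -
  have si: "inv s permutes UNIV" using s by (rule permutes_inv)
  have nc: "\<not> (\<exists>a b. (UNIV :: (real^'n) set) = cbox a b)"
    using not_bounded_UNIV bounded_cbox by metis
  show ?thesis
  proof (subst has_integral_alt, simp only: nc if_False, intro allI impI)
    fix e :: real assume e: "e > 0"
    obtain B where B: "B > 0" and
      hB: "\<forall>a b. ball 0 B \<subseteq> cbox a b \<longrightarrow>
        (\<exists>z. ((\<lambda>x. if x \<in> UNIV then f x else 0) has_integral z) (cbox a b) \<and> norm (z - i) < e)"
      using has_integral_altD[OF f nc e] by blast
    show "\<exists>B>0. \<forall>a b. ball 0 B \<subseteq> cbox a b \<longrightarrow>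
        (\<exists>z. ((\<lambda>x. if x \<in> UNIV then f (perm_act s x) else 0) has_integral z) (cbox a b) \<and> norm (z - i) < e)"
    proof (intro exI[of _ B] conjI allI impI B)
      fix a b :: "real^'n" assume sub: "ball 0 B \<subseteq> cbox a b"
      have "ball 0 B \<subseteq> cbox (perm_act s a) (perm_act s b)"
      proof
        fix y :: "real^'n" assume "y \<in> ball 0 B"
        then have "perm_act (inv s) y \<in> ball 0 B" by (simp add: norm_perm_act[OF si])
        then have "perm_act (inv s) y \<in> cbox a b" using sub by auto
        then have "perm_act s (perm_act (inv s) y) \<in> perm_act s ` cbox a b" by blast
        then show "y \<in> cbox (perm_act s a) (perm_act s b)"
          by (simp add: perm_act_inv[OF s] perm_act_cbox[OF s])
      qed
      from hB[rule_format, OF this] obtain z where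
        z: "(f has_integral z) (cbox (perm_act s a) (perm_act s b))" "norm (z - i) < e"
        by (auto simp: eta_contract_eq)
      have c1: "\<And>x. perm_act (inv s) (perm_act s x) = x" and c2: "\<And>x. perm_act s (perm_act (inv s) x) = x"
        by (simp_all add: perm_act_inv[OF s])
      have c3: "\<And>x. continuous (at x) (perm_act s)"
        by (rule linear_continuous_at) (metis linear_conv_bounded_linear linear_perm_act)
      have c4: "\<And>u v. \<exists>w z. perm_act s ` cbox u v = cbox w z"
        using perm_act_cbox[OF s] by blast
      have c5: "\<And>u v. \<exists>w z. perm_act (inv s) ` cbox u v = cbox w z"
        using perm_act_cbox[OF si] by blast
      have c6: "\<And>u v. measure lborel (perm_act s ` cbox u v) = 1 * measure lborel (cbox u v)"
        using content_perm_act[OF s] by simp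
      have "((\<lambda>x. f (perm_act s x)) has_integral (1/1) *\<^sub>R z)
              (perm_act (inv s) ` cbox (perm_act s a) (perm_act s b))"
        by (rule has_integral_twiddle[OF zero_less_one c1 c2 c3 c4 c5 c6 z(1)])
      moreover have "perm_act (inv s) ` cbox (perm_act s a) (perm_act s b) = cbox a b"
        by (simp add: perm_act_cbox[OF si] perm_act_inv[OF s])
      ultimately show "\<exists>z. ((\<lambda>x. if x \<in> UNIV then f (perm_act s x) else 0) has_integral z) (cbox a b) \<and> norm (z - i) < e"
        using z(2) by auto
    qed
  qed
qed

lemma integral_perm_UNIV:
  assumes s: "s permutes (UNIV::'n::finite set)"
  shows "integral UNIV (\<lambda>x. f (perm_act s x)) = integral (UNIV :: (real^'n) set) f"
proof (cases "f integrable_on UNIV")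
  case True
  then show ?thesis using has_integral_perm_UNIV[OF s] by (blast intro: integral_unique)
next
  case False
  have si: "inv s permutes UNIV" using s by (rule permutes_inv)
  have "\<not> (\<lambda>x. f (perm_act s x)) integrable_on UNIV"
  proof
    assume "(\<lambda>x. f (perm_act s x)) integrable_on UNIV"
    then obtain j where "((\<lambda>x. f (perm_act s x)) has_integral j) UNIV" by auto
    from has_integral_perm_UNIV[OF si this] have "(f has_integral j) UNIV"
      by (simp add: perm_act_inv[OF s])
    then show False using False by auto
  qed
  then show ?thesis using False by (simp add: not_integrable_integral)
qed

lemma Dprod_perm:
  assumes s: "s permutes (UNIV::'n::finite set)"
  shows "Dprod (perm_act s x) = Dprod x"
proof -
  have "inv s permutes UNIV" using s by (rule permutes_inv)
  then show ?thesis unfolding Dprod_def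
    by (subst (2) prod.permute[of "inv s"]) (auto simp: comp_def)
qed

lemma omega_perm:
  assumes s: "s permutes (UNIV::'n::finite set)"
  shows "omega k (perm_act s x) = omega k x"
proof -
  let ?h = "map_prod (inv s) (inv s)"
  have "bij_betw ?h {p::'n\<times>'n. fst p \<noteq> snd p} {p. fst p \<noteq> snd p}"
    by (rule bij_betwI[of _ _ _ "map_prod s s"])
      (use s in \<open>auto simp: permutes_inverses permutes_inv_eq inj_eq[OF permutes_inj[OF s]]\<close>)
  from prod.reindex_bij_betw[OF this, of "\<lambda>p. \<bar>x $ fst p - x $ snd p\<bar> powr k"]
  show ?thesis unfolding omega_def by simp
qed

lemma pos_orthant_perm:
  assumes s: "s permutes (UNIV::'n::finite set)"
  shows "perm_act s x \<in> pos_orthant \<longleftrightarrow> x \<in> pos_orthant"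
proof -
  show ?thesis unfolding pos_orthant_def using allinv[OF s, of "\<lambda>i. 0 < x $ i"] by simp
qed

lemma integral_pos_perm:
  assumes s: "s permutes (UNIV::'n::finite set)"
  fixes h :: "real^'n \<Rightarrow> complex"
  shows "integral pos_orthant (\<lambda>x. h (perm_act s x)) = integral (pos_orthant :: (real^'n) set) h"
proof -
  have "integral pos_orthant (\<lambda>x. h (perm_act s x))
      = integral UNIV (\<lambda>x. if x \<in> pos_orthant then h (perm_act s x) else 0)"
    by (rule integral_restrict_UNIV[symmetric])
  also have "\<dots> = integral UNIV (\<lambda>x. (\<lambda>y. if y \<in> pos_orthant then h y else 0) (perm_act s x))"
    by (simp add: pos_orthant_perm[OF s])
  also have "\<dots> = integral UNIV (\<lambda>y. if y \<in> pos_orthant then h y else 0)"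
    by (rule integral_perm_UNIV[OF s])
  also have "\<dots> = integral pos_orthant h"
    by (rule integral_restrict_UNIV)
  finally show ?thesis .
qed



lemma pd_zero_open:
  fixes g :: "real^'n::finite \<Rightarrow> complex"
  assumes U: "open U" "x \<in> U" and g: "\<And>y. y \<in> U \<Longrightarrow> g y = 0"
  shows "partial_deriv i g x = 0"
proof -
  let ?e = "axis i (1::real) :: real^'n"
  let ?V = "(\<lambda>t::real. x + t *\<^sub>R ?e) -` U"
  have "open ?V"
    by (rule continuous_open_vimage[OF U(1)]) (intro continuous_intros)
  moreover have "0 \<in> ?V" using U by simp
  moreover have "((\<lambda>t::real. 0::complex) has_vector_derivative 0) (at 0)"
    by (rule has_vector_derivative_const)
  ultimately have "((\<lambda>t. g (x + t *\<^sub>R ?e)) has_vector_derivative 0) (at 0)"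
    using has_vector_derivative_transform_within_open[of "\<lambda>t. 0" 0 0 ?V "\<lambda>t. g (x + t *\<^sub>R ?e)"] g
    by auto
  then show ?thesis unfolding partial_deriv_def by (rule vector_derivative_at)
qed

lemma iter_zero_open:
  assumes U: "open U" and g: "\<And>y. y \<in> U \<Longrightarrow> g y = 0" and y: "y \<in> U"
  shows "iter_partial is g y = 0"
  using y
proof (induction "is" arbitrary: y)
  case (Cons i "is")
  then show ?case by (simp add: pd_zero_open[OF U Cons.prems] Cons.IH)
qed (simp add: g)

lemma continuous_on_monomial: "continuous_on S (monomial \<alpha>)"
  unfolding monomial_def by (intro continuous_intros)

lemma compact_support_schwartz:
  assumes sm: "smooth_fun f" and K: "compact (tsupport f)"
  shows "f \<in> schwartz"
proof -
  let ?K = "tsupport f"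
  have op: "open (- ?K)" unfolding tsupport_def by auto
  have f0: "f y = 0" if "y \<in> - ?K" for y
    using that closure_subset[of "{x. f x \<noteq> 0}"] unfolding tsupport_def by blast
  have "bounded (range (\<lambda>x. monomial \<alpha> x *\<^sub>R iter_partial is f x))" for \<alpha> "is"
  proof -
    let ?F = "\<lambda>x. monomial \<alpha> x *\<^sub>R iter_partial is f x"
    have "iter_partial is f differentiable_on UNIV"
      using sm unfolding smooth_fun_def differentiable_on_def
      by (auto intro: differentiable_at_withinI)
    then have "continuous_on UNIV (iter_partial is f)"
      by (rule differentiable_imp_continuous_on)
    then have "continuous_on UNIV ?F"
      by (intro continuous_on_scaleR continuous_on_monomial)
    then have "bounded (?F ` ?K)"
      by (intro compact_imp_bounded compact_continuous_image K)
         (auto intro: continuous_on_subset)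
    moreover have "range ?F \<subseteq> insert 0 (?F ` ?K)"
    proof
      fix y assume "y \<in> range ?F"
      then obtain x where x: "y = ?F x" by blast
      show "y \<in> insert 0 (?F ` ?K)"
      proof (cases "x \<in> ?K")
        case False
        then have "iter_partial is f x = 0" using iter_zero_open[of "- tsupport f" f x "is"] op f0 by blast
        then show ?thesis using x by simp
      qed (use x in blast)
    qed
    ultimately show ?thesis
      using bounded_insert bounded_subset by blast
  qed
  then show ?thesis using sm by (simp add: schwartz_def)
qed

lemma pd_has:
  fixes g :: "real^'n::finite \<Rightarrow> complex"
  assumes "g differentiable (at x)"
  shows "((\<lambda>t. g (x + t *\<^sub>R axis i 1)) has_vector_derivative partial_deriv i g x) (at 0)"
proof -
  have d1: "(\<lambda>t::real. x + t *\<^sub>R axis i 1) differentiable (at 0)"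
    by (rule differentiable_add[OF differentiable_const differentiable_scaleR[OF differentiable_ident differentiable_const]])
  have "(g \<circ> (\<lambda>t::real. x + t *\<^sub>R axis i 1)) differentiable (at 0)"
    by (rule differentiable_chain_at[OF d1]) (simp add: assms)
  then have "(\<lambda>t::real. g (x + t *\<^sub>R axis i 1)) differentiable (at 0)"
    by (simp add: comp_def)
  from vector_derivative_works[THEN iffD1, OF this] show ?thesis
    unfolding partial_deriv_def .
qed

lemma pd_add:
  fixes g h :: "real^'n::finite \<Rightarrow> complex"
  assumes "g differentiable (at x)" "h differentiable (at x)"
  shows "partial_deriv i (\<lambda>y. g y + h y) x = partial_deriv i g x + partial_deriv i h x"
  unfolding partial_deriv_def[of i "\<lambda>y. g y + h y"]
  by (intro vector_derivative_at has_vector_derivative_add pd_has assms)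

lemma pd_coord_mult:
  fixes g :: "real^'n::finite \<Rightarrow> complex"
  assumes "g differentiable (at x)"
  shows "partial_deriv i (\<lambda>y. (y $ j) *\<^sub>R g y) x
       = (x $ j) *\<^sub>R partial_deriv i g x + (if j = i then g x else 0)"
proof -
  have r: "((\<lambda>t. (x + t *\<^sub>R axis i 1) $ j) has_field_derivative (if j = i then 1 else 0)) (at 0)"
    by (auto simp: axis_def intro!: derivative_eq_intros)
  have "((\<lambda>t. (x + t *\<^sub>R axis i 1) $ j *\<^sub>R g (x + t *\<^sub>R axis i 1)) has_vector_derivative
     ((x + 0 *\<^sub>R axis i 1) $ j *\<^sub>R partial_deriv i g x + (if j = i then 1 else 0) *\<^sub>R g (x + 0 *\<^sub>R axis i 1))) (at 0)"
    by (rule has_vector_derivative_scaleR[OF r pd_has[OF assms]])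
  from vector_derivative_at[OF this] show ?thesis
    unfolding partial_deriv_def[of i "\<lambda>y. (y $ j) *\<^sub>R g y"] by simp
qed



lemma diff_sum_list:
  assumes "\<And>l. l \<in> set L \<Longrightarrow> iter_partial l f differentiable (at x)"
  shows "(\<lambda>y. \<Sum>l\<leftarrow>L. iter_partial l f y) differentiable (at x)"
  using assms by (induction L) (auto intro!: differentiable_add)

lemma pd_sum_list:
  assumes sm: "smooth_fun f"
  shows "partial_deriv i (\<lambda>y. \<Sum>l\<leftarrow>L. iter_partial l f y) x = (\<Sum>l\<leftarrow>L. iter_partial (i # l) f x)"
proof (induction L)
  case Nil
  show ?case by (simp add: pd_zero_open[of UNIV])
next
  case (Cons l L)
  have d1: "iter_partial l f differentiable (at x)" using sm by (simp add: smooth_fun_def)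
  have d2: "(\<lambda>y. \<Sum>l\<leftarrow>L. iter_partial l f y) differentiable (at x)"
    using sm by (intro diff_sum_list) (simp add: smooth_fun_def)
  show ?case using pd_add[OF d1 d2, of i] Cons.IH by simp
qed

lemma iter_mult:
  assumes sm: "smooth_fun f"
  shows "\<exists>L. iter_partial is (\<lambda>y. (y $ j) *\<^sub>R f y)
            = (\<lambda>x. (x $ j) *\<^sub>R iter_partial is f x + (\<Sum>l\<leftarrow>L. iter_partial l f x))"
proof (induction "is")
  case Nil
  show ?case by (intro exI[of _ "[]"]) simp
next
  case (Cons i "is")
  then obtain L where L: "iter_partial is (\<lambda>y. (y $ j) *\<^sub>R f y)
            = (\<lambda>x. (x $ j) *\<^sub>R iter_partial is f x + (\<Sum>l\<leftarrow>L. iter_partial l f x))" by blast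
  have dG: "iter_partial is f differentiable (at x)" for x using sm by (simp add: smooth_fun_def)
  have d1: "(\<lambda>y. (y $ j) *\<^sub>R iter_partial is f y) differentiable (at x)" for x
    by (intro differentiable_scaleR dG) (simp add: bounded_linear_imp_differentiable bounded_linear_vec_nth)
  have d2: "(\<lambda>y. \<Sum>l\<leftarrow>L. iter_partial l f y) differentiable (at x)" for x
    using sm by (intro diff_sum_list) (simp add: smooth_fun_def)
  show ?case
  proof (intro exI[of _ "(if j = i then [is] else []) @ map (Cons i) L"] ext)
    fix x
    have "iter_partial (i # is) (\<lambda>y. (y $ j) *\<^sub>R f y) x
       = partial_deriv i (\<lambda>x. (x $ j) *\<^sub>R iter_partial is f x + (\<Sum>l\<leftarrow>L. iter_partial l f x)) x"
      by (simp add: L)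
    also have "\<dots> = partial_deriv i (\<lambda>x. (x $ j) *\<^sub>R iter_partial is f x) x
                  + partial_deriv i (\<lambda>x. \<Sum>l\<leftarrow>L. iter_partial l f x) x"
      by (rule pd_add[OF d1 d2])
    also have "\<dots> = (x $ j) *\<^sub>R iter_partial (i # is) f x + (if j = i then iter_partial is f x else 0)
                  + (\<Sum>l\<leftarrow>L. iter_partial (i # l) f x)"
      by (simp add: pd_coord_mult[OF dG] pd_sum_list[OF sm])
    also have "\<dots> = (x $ j) *\<^sub>R iter_partial (i # is) f x
       + (\<Sum>l\<leftarrow>(if j = i then [is] else []) @ map (Cons i) L. iter_partial l f x)"
      by (simp add: comp_def)
    finally show "iter_partial (i # is) (\<lambda>y. (y $ j) *\<^sub>R f y) x
       = (x $ j) *\<^sub>R iter_partial (i # is) f x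
       + (\<Sum>l\<leftarrow>(if j = i then [is] else []) @ map (Cons i) L. iter_partial l f x)" .
  qed
qed

lemma bounded_range_add:
  fixes F G :: "'a \<Rightarrow> 'b::real_normed_vector"
  assumes "bounded (range F)" "bounded (range G)"
  shows "bounded (range (\<lambda>x. F x + G x))"
proof -
  obtain a where a: "\<And>x. norm (F x) \<le> a" using assms(1) by (auto simp: bounded_iff)
  obtain b where b: "\<And>x. norm (G x) \<le> b" using assms(2) by (auto simp: bounded_iff)
  have "norm (F x + G x) \<le> a + b" for x
    by (rule order_trans[OF norm_triangle_ineq add_mono[OF a b]])
  then show ?thesis by (auto simp: bounded_iff)
qed

lemma bounded_range_sum_list:
  fixes F :: "'c \<Rightarrow> 'a \<Rightarrow> 'b::real_normed_vector"
  assumes "\<And>l. l \<in> set L \<Longrightarrow> bounded (range (F l))"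
  shows "bounded (range (\<lambda>x. \<Sum>l\<leftarrow>L. F l x))"
  using assms
proof (induction L)
  case Nil
  then show ?case by simp
next
  case (Cons a L)
  then show ?case by (simp add: bounded_range_add)
qed

lemma monomial_Suc:
  "monomial (\<alpha>(j := Suc (\<alpha> j))) x = x $ j * monomial \<alpha> (x :: real^'n::finite)"
proof -
  have "monomial (\<alpha>(j := Suc (\<alpha> j))) x = x $ j ^ Suc (\<alpha> j) * (\<Prod>i\<in>UNIV - {j}. x $ i ^ (\<alpha>(j := Suc (\<alpha> j))) i)"
    unfolding monomial_def by (subst prod.remove[of _ j]) auto
  also have "(\<Prod>i\<in>UNIV - {j}. x $ i ^ (\<alpha>(j := Suc (\<alpha> j))) i) = (\<Prod>i\<in>UNIV - {j}. x $ i ^ \<alpha> i)"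
    by (rule prod.cong) auto
  also have "monomial \<alpha> x = x $ j ^ \<alpha> j * (\<Prod>i\<in>UNIV - {j}. x $ i ^ \<alpha> i)"
    unfolding monomial_def by (subst prod.remove[of _ j]) auto
  ultimately show ?thesis by (simp only: power_Suc mult.assoc)
qed

lemma scaleR_sum_list_right:
  fixes F :: "'c \<Rightarrow> 'b::real_vector"
  shows "c *\<^sub>R (\<Sum>l\<leftarrow>L. F l) = (\<Sum>l\<leftarrow>L. c *\<^sub>R F l)"
  by (induction L) (simp_all add: scaleR_add_right)

lemma mult_coord_schwartz:
  assumes f: "f \<in> schwartz"
  shows "(\<lambda>y. (y $ j) *\<^sub>R f y) \<in> schwartz"
proof -
  have sm: "smooth_fun f" using f by (simp add: schwartz_def)
  have bd: "bounded (range (\<lambda>x. monomial \<alpha> x *\<^sub>R iter_partial is f x))" for \<alpha> "is"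
    using f by (simp add: schwartz_def)
  have "iter_partial is (\<lambda>y. (y $ j) *\<^sub>R f y) differentiable (at x) \<and>
        bounded (range (\<lambda>x. monomial \<alpha> x *\<^sub>R iter_partial is (\<lambda>y. (y $ j) *\<^sub>R f y) x))" for "is" x \<alpha>
  proof -
    obtain L where L: "iter_partial is (\<lambda>y. (y $ j) *\<^sub>R f y)
            = (\<lambda>x. (x $ j) *\<^sub>R iter_partial is f x + (\<Sum>l\<leftarrow>L. iter_partial l f x))"
      using iter_mult[OF sm] by blast
    have dG: "iter_partial is f differentiable (at x)" using sm by (simp add: smooth_fun_def)
    have "(\<lambda>x. (x $ j) *\<^sub>R iter_partial is f x + (\<Sum>l\<leftarrow>L. iter_partial l f x)) differentiable (at x)"
      using sm
      by (intro differentiable_add differentiable_scaleR dG diff_sum_list)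
         (simp_all add: bounded_linear_imp_differentiable bounded_linear_vec_nth smooth_fun_def)
    moreover have "bounded (range (\<lambda>x. monomial \<alpha> x *\<^sub>R ((x $ j) *\<^sub>R iter_partial is f x + (\<Sum>l\<leftarrow>L. iter_partial l f x))))"
    proof -
      have eq: "monomial \<alpha> x *\<^sub>R ((x $ j) *\<^sub>R iter_partial is f x + (\<Sum>l\<leftarrow>L. iter_partial l f x))
        = monomial (\<alpha>(j := Suc (\<alpha> j))) x *\<^sub>R iter_partial is f x
          + (\<Sum>l\<leftarrow>L. monomial \<alpha> x *\<^sub>R iter_partial l f x)" for x
        by (simp add: monomial_Suc scaleR_add_right scaleR_sum_list_right mult.commute comp_def)
      show ?thesis unfolding eq
        by (intro bounded_range_add bounded_range_sum_list bd)
    qed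
    ultimately show ?thesis unfolding L by blast
  qed
  then show ?thesis by (simp add: schwartz_def smooth_fun_def)
qed

lemma prod_mult_schwartz:
  assumes f: "f \<in> schwartz" and S: "finite S"
  shows "(\<lambda>y. (\<Prod>i\<in>S. y $ i) *\<^sub>R f y) \<in> schwartz"
  using S
proof (induction S rule: finite_induct)
  case empty
  then show ?case using f by (simp add: eta_contract_eq)
next
  case (insert j S)
  have "(\<lambda>y. (y $ j) *\<^sub>R ((\<Prod>i\<in>S. y $ i) *\<^sub>R f y)) \<in> schwartz"
    by (rule mult_coord_schwartz[OF insert.IH])
  then show ?case using insert.hyps by simp
qed

lemma D_mult_schwartz:
  assumes f: "f \<in> schwartz"
  shows "(\<lambda>x. complex_of_real (Dprod x) * f x) \<in> schwartz"
  using prod_mult_schwartz[OF f, of UNIV] by (simp add: Dprod_def scaleR_conv_of_real)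



lemma entire_eq:
  fixes F G :: "complex \<Rightarrow> complex"
  assumes "F holomorphic_on UNIV" "G holomorphic_on UNIV" "\<And>z. Re z > m \<Longrightarrow> F z = G z"
  shows "F w = G w"
proof (rule analytic_continuation_open[of "{z. Re z > m}" UNIV F G w])
  have "complex_of_real (m + 1) \<in> {z. Re z > m}" by simp
  then show "{z. Re z > m} \<noteq> {}" by blast
qed (use assms in \<open>auto simp: open_halfspace_Re_gt\<close>)

lemma times_powr_complex:
  fixes z a :: complex
  assumes "z \<noteq> 0"
  shows "z * z powr a = z powr (a + 1)"
proof -
  have "exp (Ln z * (a + 1)) = exp (a * Ln z) * exp (Ln z)"
    by (simp add: distrib_left exp_add mult.commute)
  then show ?thesis using assms by (simp add: powr_def exp_Ln mult.commute)
qed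

lemma Re_pos_not_nonpos_Int:
  fixes z :: complex
  assumes "Re z > 0"
  shows "z \<notin> \<int>\<^sub>\<le>\<^sub>0"
proof
  assume "z \<in> \<int>\<^sub>\<le>\<^sub>0"
  then obtain n where "z = - of_nat n" by (rule nonpos_Ints_cases')
  then show False using assms by simp
qed

lemma Gamma_n_plus1:
  assumes k: "k > 0" and mu: "Re \<mu> > mu0 n k"
  shows "Gamma_n n (\<mu> + 1) k = (\<Prod>j=1..n. \<mu> - complex_of_real (k * (real j - 1))) * Gamma_n n \<mu> k"
    and "(\<Prod>j=1..n. \<mu> - complex_of_real (k * (real j - 1))) \<noteq> 0"
proof -
  have re: "Re (\<mu> - complex_of_real (k * (real j - 1))) > 0" if "j \<in> {1..n}" for j
  proof -
    have "k * (real j - 1) \<le> k * (real n - 1)"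
      using that k by (intro mult_left_mono) auto
    then show ?thesis using mu by (simp add: mu0_def)
  qed
  have "Gamma (\<mu> + 1 - complex_of_real (k * (real j - 1)))
      = (\<mu> - complex_of_real (k * (real j - 1))) * Gamma (\<mu> - complex_of_real (k * (real j - 1)))"
    if "j \<in> {1..n}" for j
  proof -
    have eq: "\<mu> + 1 - complex_of_real (k * (real j - 1)) = (\<mu> - complex_of_real (k * (real j - 1))) + 1"
      by simp
    show ?thesis unfolding eq
      by (rule Gamma_plus1[OF Re_pos_not_nonpos_Int[OF re[OF that]]])
  qed
  then show "Gamma_n n (\<mu> + 1) k = (\<Prod>j=1..n. \<mu> - complex_of_real (k * (real j - 1))) * Gamma_n n \<mu> k"
    unfolding Gamma_n_def by (simp add: prod.distrib[symmetric])
  show "(\<Prod>j=1..n. \<mu> - complex_of_real (k * (real j - 1))) \<noteq> 0"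
  proof
    assume "(\<Prod>j=1..n. \<mu> - complex_of_real (k * (real j - 1))) = 0"
    then obtain j where "j \<in> {1..n}" "\<mu> - complex_of_real (k * (real j - 1)) = 0"
      by (auto simp: prod_zero_iff)
    then show False using re by fastforce
  qed
qed

theorem lemma5p8:
  fixes k :: real and \<mu> :: complex
    and R :: "complex \<Rightarrow> (real^'n::finite \<Rightarrow> complex) \<Rightarrow> complex"
  assumes "k > 0"
    and "is_riesz_family k R"
  shows "(\<forall>s. s permutes (UNIV::'n set) \<longrightarrow> (\<forall>f\<in>schwartz. dist_perm s (R \<mu>) f = R \<mu> f)) \<and>
         dist_supp_subset (R \<mu>) (closure pos_orthant) \<and>
         (\<forall>f\<in>schwartz. dist_mult_D (R \<mu>) f =
           (\<Prod>j=1..CARD('n). \<mu> - complex_of_real (k * (real j - 1))) * R (\<mu> + 1) f)"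
proof -
  have hol: "(\<lambda>\<mu>. R \<mu> f) holomorphic_on UNIV" if "f \<in> schwartz" for f
    using assms(2) that by (auto simp: is_riesz_family_def)
  have int: "R \<mu> f = riesz_integral k \<mu> f" if "Re \<mu> > mu0 CARD('n) k" "f \<in> schwartz" for \<mu> f
    using assms(2) that by (auto simp: is_riesz_family_def)
  have P1: "dist_perm s (R \<mu>) f = R \<mu> f" if s: "s permutes (UNIV::'n set)" and f: "f \<in> schwartz" for s f
  proof -
    have g: "f \<circ> perm_act s \<in> schwartz" by (rule schwartz_perm[OF s f])
    have "dist_perm s (R \<mu>) f = R \<mu> (f \<circ> perm_act s)"
      by (simp add: dist_perm_def fun_perm_def permutes_inv_inv[OF s])
    also have "\<dots> = R \<mu> f"
    proof (rule entire_eq[of "\<lambda>\<mu>. R \<mu> (f \<circ> perm_act s)" "\<lambda>\<mu>. R \<mu> f" "mu0 CARD('n) k"])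
      show "(\<lambda>\<mu>. R \<mu> (f \<circ> perm_act s)) holomorphic_on UNIV" by (rule hol[OF g])
      show "(\<lambda>\<mu>. R \<mu> f) holomorphic_on UNIV" by (rule hol[OF f])
      fix z assume z: "Re z > mu0 CARD('n) k"
      let ?h = "\<lambda>y. f y * complex_of_real (Dprod y) powr (z - of_real (mu0 CARD('n) k) - 1)
                                 * complex_of_real (omega k y)"
      have "integral pos_orthant (\<lambda>x. (f \<circ> perm_act s) x * complex_of_real (Dprod x) powr (z - of_real (mu0 CARD('n) k) - 1)
                                 * complex_of_real (omega k x))
            = integral pos_orthant (\<lambda>x. ?h (perm_act s x))"
        by (simp add: Dprod_perm[OF s] omega_perm[OF s])
      also have "\<dots> = integral pos_orthant ?h" by (rule integral_pos_perm[OF s])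
      finally show "R z (f \<circ> perm_act s) = R z f"
        using int[OF z g] int[OF z f] by (simp add: riesz_integral_def)
    qed
    finally show ?thesis .
  qed
  have P2: "dist_supp_subset (R \<mu>) (closure pos_orthant)"
    unfolding dist_supp_subset_def
  proof (intro allI impI)
    fix f :: "real^'n \<Rightarrow> complex"
    assume H: "smooth_fun f \<and> compact (tsupport f) \<and> tsupport f \<inter> closure pos_orthant = {}"
    have f: "f \<in> schwartz" using H compact_support_schwartz by blast
    have f0: "f x = 0" if "x \<in> pos_orthant" for x
    proof -
      have "x \<notin> tsupport f" using H that closure_subset[of pos_orthant] by blast
      then show ?thesis using closure_subset[of "{x. f x \<noteq> 0}"] unfolding tsupport_def by blast
    qed
    show "R \<mu> f = 0"
    proof (rule entire_eq[of "\<lambda>\<mu>. R \<mu> f" "\<lambda>\<mu>. 0" "mu0 CARD('n) k"])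
      show "(\<lambda>\<mu>. R \<mu> f) holomorphic_on UNIV" by (rule hol[OF f])
      show "(\<lambda>\<mu>. 0) holomorphic_on UNIV" by (rule holomorphic_on_const)
      fix z assume z: "Re z > mu0 CARD('n) k"
      have "integral pos_orthant (\<lambda>x. f x * complex_of_real (Dprod x) powr (z - of_real (mu0 CARD('n) k) - 1)
                                 * complex_of_real (omega k x)) = integral pos_orthant (\<lambda>x::real^'n. 0)"
        by (rule Henstock_Kurzweil_Integration.integral_cong) (simp add: f0)
      then show "R z f = 0" using int[OF z f] by (simp add: riesz_integral_def)
    qed
  qed
  have P3: "dist_mult_D (R \<mu>) f =
           (\<Prod>j=1..CARD('n). \<mu> - complex_of_real (k * (real j - 1))) * R (\<mu> + 1) f"
    if f: "f \<in> schwartz" for f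
  proof -
    let ?Df = "\<lambda>x. complex_of_real (Dprod x) * f x"
    let ?P = "\<lambda>\<mu>. (\<Prod>j=1..CARD('n). \<mu> - complex_of_real (k * (real j - 1)))"
    have Df: "?Df \<in> schwartz" by (rule D_mult_schwartz[OF f])
    have "R \<mu> ?Df = ?P \<mu> * R (\<mu> + 1) f"
    proof (rule entire_eq[of "\<lambda>\<mu>. R \<mu> ?Df" "\<lambda>\<mu>. ?P \<mu> * R (\<mu> + 1) f" "mu0 CARD('n) k"])
      show "(\<lambda>\<mu>. R \<mu> ?Df) holomorphic_on UNIV" by (rule hol[OF Df])
      have "(\<lambda>\<mu>. R (\<mu> + 1) f) holomorphic_on UNIV"
      proof -
        have "(\<lambda>\<mu>::complex. \<mu> + 1) holomorphic_on UNIV" by (intro holomorphic_intros)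
        then show ?thesis
          using holomorphic_on_compose[of "\<lambda>\<mu>. \<mu> + 1" UNIV "\<lambda>\<mu>. R \<mu> f"] hol[OF f]
          by (auto simp: comp_def)
      qed
      then show "(\<lambda>\<mu>. ?P \<mu> * R (\<mu> + 1) f) holomorphic_on UNIV"
        by (intro holomorphic_intros)
      fix z assume z: "Re z > mu0 CARD('n) k"
      have z1: "Re (z + 1) > mu0 CARD('n) k" using z by simp
      let ?a = "z - of_real (mu0 CARD('n) k) - 1"
      have "integral pos_orthant (\<lambda>x. ?Df x * complex_of_real (Dprod x) powr ?a * complex_of_real (omega k x))
          = integral pos_orthant (\<lambda>x. f x * complex_of_real (Dprod x) powr (z + 1 - of_real (mu0 CARD('n) k) - 1)
                * complex_of_real (omega k x))"
      proof (rule Henstock_Kurzweil_Integration.integral_cong)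
        fix x :: "real^'n" assume x: "x \<in> pos_orthant"
        have "Dprod x > 0" using x unfolding Dprod_def pos_orthant_def by (auto intro: prod_pos)
        then have "complex_of_real (Dprod x) * complex_of_real (Dprod x) powr ?a
            = complex_of_real (Dprod x) powr (?a + 1)"
          by (intro times_powr_complex) simp
        moreover have "?a + 1 = z + 1 - of_real (mu0 CARD('n) k) - 1" by simp
        ultimately have e: "complex_of_real (Dprod x) powr (z + 1 - of_real (mu0 CARD('n) k) - 1)
            = complex_of_real (Dprod x) * complex_of_real (Dprod x) powr ?a"
          by simp
        show "?Df x * complex_of_real (Dprod x) powr ?a * complex_of_real (omega k x)
          = f x * complex_of_real (Dprod x) powr (z + 1 - of_real (mu0 CARD('n) k) - 1)
                * complex_of_real (omega k x)"
          unfolding e by (simp only: mult_ac)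
      qed
      moreover note G = Gamma_n_plus1[OF assms(1) z]
      ultimately show "R z ?Df = ?P z * R (z + 1) f"
        unfolding int[OF z Df] int[OF z1 f] riesz_integral_def G(1)
        using G(2) by (simp add: field_simps)
    qed
    then show ?thesis by (simp add: dist_mult_D_def)
  qed
  show ?thesis using P1 P2 P3 by blast
qed

end
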